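(* A strategy of the chair is regret-free if and only if it is efficient.
   Context: Let $\mathcal{X}$ be a finite set of alternatives. A proto-ranking is an irreflexive and transitive binary relation on $\mathcal{X}$; a ranking is a total proto-ranking; a tournament is a total and asymmetric binary relation on $\mathcal{X}$. The chair has a fixed preference $\succ$, which is a ranking on $\mathcal{X}$. Interaction: given a tournament $\mathrel{W}$, set $R_0=\varnothing$. In each period $t\geq 1$ in which $R_{t-1}$ is not total, the chair offers a pair $\{x,y\}$ of distinct alternatives unranked by $R_{t-1}$; the winner is $x$ if $x\mathrel{W}y$ and $y$ otherwise, and $R_t$ is the transitive closure of $R_{t-1}\cup\{(\text{winner},\text{loser})\}$. The process stops when $R_t$ is total. A history is a finite sequence of (winner, loser) pairs that can arise in this way; it is terminal if its induced proto-ranking is total. A strategy assigns to each non-terminal history a pair unranked at that history. The outcome of $\sigma$ under $\mathrel{W}$ is the final ranking. A ranking is $\mathrel{W}$-feasible if it is the outcome under $\mathrel{W}$ of some strategy. $R$ is more aligned with $\succ$ than $R'$ if for all $x\succ y$, $xR'y$ implies $xRy$. A ranking is $\mathrel{W}$-unimprovable if no other $\mathrel{W}$-feasible ranking is more aligned with $\succ$ than it. A strategy is regret-free if for every tournament $\mathrel{W}$ its outcome under $\mathrel{W}$ is $\mathrel{W}$-unimprovable. A ranking $R$ is $\mathrel{W}$-efficient if $x\succ y$ and $x\mathrel{W}y$ imply $xRy$; a strategy is efficient if for every tournament $\mathrel{W}$ its outcome under $\mathrel{W}$ is $\mathrel{W}$-efficient. *)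

theory Defs
  imports Main
begin

text \<open>Alternatives are the elements of a finite type 'a. Binary relations are sets of pairs.
  A pair (x,y) in a relation means x is ranked above y.\<close>

definition proto_ranking :: "'a rel \<Rightarrow> bool" where
  "proto_ranking R \<longleftrightarrow> irrefl R \<and> trans R"

definition ranking :: "'a rel \<Rightarrow> bool" where
  "ranking R \<longleftrightarrow> proto_ranking R \<and> total R"

definition tournament :: "'a rel \<Rightarrow> bool" where
  "tournament W \<longleftrightarrow> total W \<and> asym W"

text \<open>A history is a list of (winner, loser) pairs; its induced proto-ranking is the
  transitive closure of the set of these pairs.\<close>

definition induced :: "('a \<times> 'a) list \<Rightarrow> 'a rel" where
  "induced h = trancl (set h)"

definition unranked :: "'a rel \<Rightarrow> 'a \<times> 'a \<Rightarrow> bool" where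
  "unranked R p \<longleftrightarrow> fst p \<noteq> snd p \<and> p \<notin> R \<and> (snd p, fst p) \<notin> R"

definition terminal :: "('a \<times> 'a) list \<Rightarrow> bool" where
  "terminal h \<longleftrightarrow> total (induced h)"

text \<open>Histories: sequences that can arise from the interaction (for some tournament and some
  choices of the chair).  Since each offered pair is unranked, no unordered pair is offered
  twice, so any orientation of the offered pair can be realised by some tournament.\<close>

inductive is_history :: "('a \<times> 'a) list \<Rightarrow> bool" where
  Nil: "is_history []"
| snoc: "is_history h \<Longrightarrow> \<not> terminal h \<Longrightarrow> unranked (induced h) (x, y)
           \<Longrightarrow> is_history (h @ [(x, y)])"

text \<open>A strategy maps histories to (ordered representations of) pairs {x,y}; it is a valid
  strategy if at every non-terminal history it offers a pair unranked at that history.\<close>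

type_synonym 'a strategy = "('a \<times> 'a) list \<Rightarrow> 'a \<times> 'a"

definition strategy :: "'a strategy \<Rightarrow> bool" where
  "strategy \<sigma> \<longleftrightarrow> (\<forall>h. is_history h \<and> \<not> terminal h \<longrightarrow> unranked (induced h) (\<sigma> h))"

definition winner_loser :: "'a rel \<Rightarrow> 'a \<times> 'a \<Rightarrow> 'a \<times> 'a" where
  "winner_loser W p = (if p \<in> W then p else (snd p, fst p))"

inductive reach :: "'a strategy \<Rightarrow> 'a rel \<Rightarrow> ('a \<times> 'a) list \<Rightarrow> bool"
  for \<sigma> W where
  Nil: "reach \<sigma> W []"
| snoc: "reach \<sigma> W h \<Longrightarrow> \<not> terminal h \<Longrightarrow> reach \<sigma> W (h @ [winner_loser W (\<sigma> h)])"

definition outcome :: "'a strategy \<Rightarrow> 'a rel \<Rightarrow> 'a rel" where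
  "outcome \<sigma> W = induced (THE h. reach \<sigma> W h \<and> terminal h)"

definition feasible :: "'a rel \<Rightarrow> 'a rel \<Rightarrow> bool" where
  "feasible W R \<longleftrightarrow> ranking R \<and> (\<exists>\<sigma>. strategy \<sigma> \<and> outcome \<sigma> W = R)"

definition more_aligned :: "'a rel \<Rightarrow> 'a rel \<Rightarrow> 'a rel \<Rightarrow> bool" where
  "more_aligned P R R' \<longleftrightarrow> (\<forall>x y. (x, y) \<in> P \<longrightarrow> (x, y) \<in> R' \<longrightarrow> (x, y) \<in> R)"

definition unimprovable :: "'a rel \<Rightarrow> 'a rel \<Rightarrow> 'a rel \<Rightarrow> bool" where
  "unimprovable P W R \<longleftrightarrow>
     \<not> (\<exists>R'. feasible W R' \<and> R' \<noteq> R \<and> more_aligned P R' R)"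

definition regret_free :: "'a rel \<Rightarrow> 'a strategy \<Rightarrow> bool" where
  "regret_free P \<sigma> \<longleftrightarrow> (\<forall>W. tournament W \<longrightarrow> unimprovable P W (outcome \<sigma> W))"

definition W_efficient :: "'a rel \<Rightarrow> 'a rel \<Rightarrow> 'a rel \<Rightarrow> bool" where
  "W_efficient P W R \<longleftrightarrow> (\<forall>x y. (x, y) \<in> P \<longrightarrow> (x, y) \<in> W \<longrightarrow> (x, y) \<in> R)"

definition efficient :: "'a rel \<Rightarrow> 'a strategy \<Rightarrow> bool" where
  "efficient P \<sigma> \<longleftrightarrow> (\<forall>W. tournament W \<longrightarrow> W_efficient P W (outcome \<sigma> W))"

end

theory Submission
  imports Defs
begin

definition consec :: "'a rel \<Rightarrow> 'a \<Rightarrow> 'a \<Rightarrow> bool" where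
  "consec R x y \<longleftrightarrow> (x, y) \<in> R \<and> \<not> (\<exists>z. (x, z) \<in> R \<and> (z, y) \<in> R)"

lemma unranked_swap: "unranked R (a, b) \<longleftrightarrow> unranked R (b, a)"
  unfolding unranked_def by auto

lemma wl_cases: "winner_loser W p = p \<or> winner_loser W p = (snd p, fst p)"
  unfolding winner_loser_def by auto

lemma unranked_wl: "unranked R (winner_loser W p) \<longleftrightarrow> unranked R p"
  unfolding winner_loser_def unranked_def by auto

lemma reach_hist:
  assumes "strategy \<sigma>" "reach \<sigma> W h"
  shows "is_history h"
  using assms(2)
proof induction
  case Nil
  then show ?case by (rule is_history.Nil)
next
  case (snoc h)
  have "unranked (induced h) (\<sigma> h)" using assms(1) snoc unfolding strategy_def by blast
  then have "unranked (induced h) (winner_loser W (\<sigma> h))" by (simp add: unranked_wl)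
  obtain a b where ab: "winner_loser W (\<sigma> h) = (a, b)" by (cases "winner_loser W (\<sigma> h)")
  show ?case unfolding ab using is_history.snoc[of h a b] snoc \<open>unranked (induced h) (winner_loser W (\<sigma> h))\<close> ab
    by simp
qed

lemma reach_unr:
  assumes "strategy \<sigma>" "reach \<sigma> W h" "\<not> terminal h"
  shows "unranked (induced h) (winner_loser W (\<sigma> h))"
  using assms reach_hist[OF assms(1,2)] unfolding strategy_def by (simp add: unranked_wl)

lemma reach_distinct:
  assumes "strategy \<sigma>" "reach \<sigma> W h"
  shows "distinct h"
  using assms(2)
proof induction
  case Nil
  then show ?case by simp
next
  case (snoc h)
  have "unranked (induced h) (winner_loser W (\<sigma> h))" using reach_unr assms(1) snoc by blast
  then have "winner_loser W (\<sigma> h) \<notin> set h" unfolding unranked_def induced_def by (auto dest: r_into_trancl')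
  then show ?case using snoc by simp
qed

lemma reach_snoc_iff:
  "reach \<sigma> W (h @ [x]) \<longleftrightarrow> reach \<sigma> W h \<and> \<not> terminal h \<and> x = winner_loser W (\<sigma> h)"
proof
  assume "reach \<sigma> W (h @ [x])"
  then show "reach \<sigma> W h \<and> \<not> terminal h \<and> x = winner_loser W (\<sigma> h)"
    by (cases rule: reach.cases) auto
next
  assume "reach \<sigma> W h \<and> \<not> terminal h \<and> x = winner_loser W (\<sigma> h)"
  then show "reach \<sigma> W (h @ [x])" using reach.snoc by blast
qed

lemma reach_det:
  assumes "reach \<sigma> W h1" "reach \<sigma> W h2" "length h1 = length h2"
  shows "h1 = h2"
  using assms
proof (induction arbitrary: h2 rule: reach.induct)
  case Nil
  then show ?case by simp
next
  case (snoc h)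
  then obtain h2' y where h2: "h2 = h2' @ [y]"
    by (metis length_greater_0_conv rev_exhaust snoc_eq_iff_butlast Nil_is_append_conv length_append_singleton zero_less_Suc)
  have "reach \<sigma> W h2'" "y = winner_loser W (\<sigma> h2')" using snoc(4) h2 reach_snoc_iff by blast+
  moreover have "length h = length h2'" using snoc(5) h2 by simp
  moreover have "h = h2'" using snoc.IH calculation by blast
  ultimately show ?case using h2 by simp
qed

lemma reach_take:
  assumes "reach \<sigma> W h"
  shows "reach \<sigma> W (take k h)"
  using assms
proof induction
  case Nil
  then show ?case by (simp add: reach.Nil)
next
  case (snoc h)
  then show ?case
    by (cases "k \<le> length h") (auto intro: reach.snoc)
qed

lemma reach_len:
  assumes "strategy \<sigma>" "reach \<sigma> W (h :: (('a::finite) \<times> 'a) list)"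
  shows "length h \<le> card (UNIV :: ('a \<times> 'a) set)"
proof -
  have "length h = card (set h)" using reach_distinct[OF assms] by (simp add: distinct_card)
  also have "\<dots> \<le> card (UNIV :: ('a \<times> 'a) set)" by (rule card_mono) auto
  finally show ?thesis .
qed

lemma reach_term_max:
  assumes "reach \<sigma> W h1" "terminal h1" "reach \<sigma> W h2"
  shows "\<not> length h1 < length h2"
proof
  assume lt: "length h1 < length h2"
  have "take (Suc (length h1)) h2 = take (length h1) h2 @ [h2 ! length h1]"
    using lt by (simp add: take_Suc_conv_app_nth)
  moreover have "reach \<sigma> W (take (Suc (length h1)) h2)" using reach_take assms(3) by blast
  ultimately have "reach \<sigma> W (take (length h1) h2)" "\<not> terminal (take (length h1) h2)"
    using reach_snoc_iff by metis+
  moreover have "take (length h1) h2 = h1"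
    using reach_det[OF assms(1) calculation(1)] lt by simp
  ultimately show False using assms(2) by simp
qed

lemma ex1_terminal:
  assumes "strategy \<sigma>"
  shows "\<exists>!h. reach \<sigma> W (h :: (('a::finite) \<times> 'a) list) \<and> terminal h"
proof -
  obtain n where n: "\<exists>h. reach \<sigma> W h \<and> length h = n"
     "\<forall>m. (\<exists>h. reach \<sigma> W h \<and> length h = m) \<longrightarrow> m \<le> n"
  proof -
    have "\<exists>h. reach \<sigma> W h \<and> length h = 0"
      by (rule exI[of _ "[]"]) (simp add: reach.Nil)
    moreover have "\<forall>m. (\<exists>h. reach \<sigma> W h \<and> length h = m) \<longrightarrow> m \<le> card (UNIV :: ('a \<times> 'a) set)"
      using reach_len[OF assms] by blast
    ultimately have "\<exists>n. (\<exists>h. reach \<sigma> W h \<and> length h = n) \<and>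
       (\<forall>m. (\<exists>h. reach \<sigma> W h \<and> length h = m) \<longrightarrow> m \<le> n)"
      by (rule Nat.ex_has_greatest_nat)
    then show ?thesis using that by blast
  qed
  then obtain h where h: "reach \<sigma> W h" "\<forall>h'. reach \<sigma> W h' \<longrightarrow> length h' \<le> length h"
    by blast
  have ht: "terminal h"
  proof (rule ccontr)
    assume "\<not> terminal h"
    then have "reach \<sigma> W (h @ [winner_loser W (\<sigma> h)])" using h(1) reach.snoc by blast
    then have "length (h @ [winner_loser W (\<sigma> h)]) \<le> length h" using h(2) by blast
    then show False by simp
  qed
  show ?thesis
  proof (rule ex1I[of _ h])
    show "reach \<sigma> W h \<and> terminal h" using h(1) ht by blast
  next
    fix h2 assume h2: "reach \<sigma> W h2 \<and> terminal h2"
    then have "\<not> length h2 < length h" "\<not> length h < length h2"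
      using reach_term_max h(1) ht by blast+
    then have "length h2 = length h" by simp
    then show "h2 = h" using reach_det h(1) h2 by blast
  qed
qed

lemma outcome_eq:
  assumes "strategy \<sigma>" "reach \<sigma> W (h :: (('a::finite) \<times> 'a) list)" "terminal h"
  shows "outcome \<sigma> W = induced h"
proof -
  have "(THE h. reach \<sigma> W h \<and> terminal h) = h"
    using ex1_terminal[OF assms(1)] assms(2,3) by (simp add: the1_equality)
  then show ?thesis unfolding outcome_def by simp
qed

lemma hist_acyclic:
  assumes "is_history h"
  shows "acyclic (set h)"
  using assms
proof induction
  case Nil
  then show ?case by (simp add: acyclic_def)
next
  case (snoc h x y)
  have "x \<noteq> y" "(y, x) \<notin> (set h)\<^sup>+"
    using snoc(3) unfolding unranked_def induced_def by auto
  then have "(y, x) \<notin> (set h)\<^sup>*" by (auto simp: rtrancl_eq_or_trancl)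
  then have "acyclic (insert (x, y) (set h))" using snoc(4) by (simp add: acyclic_insert)
  then show ?case by simp
qed

lemma induced_ranking:
  assumes "is_history h" "terminal h"
  shows "ranking (induced h)"
proof -
  have "irrefl (induced h)"
    using hist_acyclic[OF assms(1)] unfolding induced_def by (simp add: acyclic_irrefl)
  moreover have "trans (induced h)" unfolding induced_def by (rule trans_trancl)
  moreover have "total (induced h)" using assms(2) unfolding terminal_def .
  ultimately show ?thesis unfolding ranking_def proto_ranking_def by blast
qed

lemma outcome_ranking:
  assumes "strategy \<sigma>"
  shows "ranking (outcome \<sigma> (W :: ('a::finite) rel))"
proof -
  obtain h where h: "reach \<sigma> W h" "terminal h" using ex1_terminal[OF assms, of W] by blast
  show ?thesis using outcome_eq[OF assms h] induced_ranking[OF reach_hist[OF assms h(1)] h(2)]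
    by simp
qed

lemma wl_in:
  assumes "tournament W" "fst p \<noteq> snd p"
  shows "winner_loser W p \<in> W"
  using assms unfolding tournament_def winner_loser_def total_on_def asym_on_def
  by (cases p) auto

lemma reach_in_W:
  assumes "tournament W" "strategy \<sigma>" "reach \<sigma> W h"
  shows "set h \<subseteq> W"
  using assms(3)
proof induction
  case Nil
  then show ?case by simp
next
  case (snoc h)
  have "unranked (induced h) (winner_loser W (\<sigma> h))" using reach_unr assms(2) snoc by blast
  then have "winner_loser W (\<sigma> h) \<in> W" using wl_in[OF assms(1)]
    unfolding unranked_def by (metis unranked_def unranked_wl)
  then show ?case using snoc by simp
qed

lemma consec_induced:
  assumes "consec (induced h) x y"
  shows "(x, y) \<in> set h"
proof -
  have xy: "(x, y) \<in> (set h)\<^sup>+" and nz: "\<not> (\<exists>z. (x, z) \<in> (set h)\<^sup>+ \<and> (z, y) \<in> (set h)\<^sup>+)"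
    using assms unfolding consec_def induced_def by auto
  from xy show ?thesis
  proof (cases rule: tranclE)
    case base
    then show ?thesis .
  next
    case (step c)
    then show ?thesis using nz by blast
  qed
qed

lemma feasible_consec:
  assumes "tournament W" "feasible W (R :: ('a::finite) rel)" "consec R x y"
  shows "(x, y) \<in> W"
proof -
  obtain \<sigma> where s: "strategy \<sigma>" "outcome \<sigma> W = R" using assms(2) unfolding feasible_def by blast
  obtain h where h: "reach \<sigma> W h" "terminal h" using ex1_terminal[OF s(1), of W] by blast
  have "R = induced h" using outcome_eq[OF s(1) h] s(2) by simp
  then have "(x, y) \<in> set h" using consec_induced[of h x y] assms(3) by simp
  then show ?thesis using reach_in_W[OF assms(1) s(1) h(1)] by blast
qed

lemma chain:
  fixes R :: "('a::finite) rel"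
  assumes "trans R" "irrefl R" "trans T" "\<forall>x y. consec R x y \<longrightarrow> (x, y) \<in> T"
  shows "R \<subseteq> T"
proof -
  define B where "B x y = {z. (x, z) \<in> R \<and> (z, y) \<in> R}" for x y
  have "\<forall>x y. card (B x y) = n \<longrightarrow> (x, y) \<in> R \<longrightarrow> (x, y) \<in> T" for n
  proof (induction n rule: less_induct)
    case (less n)
    show ?case
    proof (intro allI impI)
      fix x y assume c: "card (B x y) = n" and xy: "(x, y) \<in> R"
      show "(x, y) \<in> T"
      proof (cases "consec R x y")
        case True
        then show ?thesis using assms(4) by blast
      next
        case False
        then obtain z where z: "(x, z) \<in> R" "(z, y) \<in> R" using xy unfolding consec_def by blast
        have zz: "(z, z) \<notin> R" using assms(2) unfolding irrefl_def by blast
        have "B x z \<subset> B x y"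
        proof
          show "B x z \<subseteq> B x y" unfolding B_def using z assms(1) unfolding trans_def by blast
          show "B x z \<noteq> B x y" unfolding B_def using z zz by blast
        qed
        then have "card (B x z) < n" using c psubset_card_mono[OF finite] by blast
        then have 1: "(x, z) \<in> T" using less z by blast
        have "B z y \<subset> B x y"
        proof
          show "B z y \<subseteq> B x y" unfolding B_def using z assms(1) unfolding trans_def by blast
          show "B z y \<noteq> B x y" unfolding B_def using z zz by blast
        qed
        then have "card (B z y) < n" using c psubset_card_mono[OF finite] by blast
        then have 2: "(z, y) \<in> T" using less z by blast
        show ?thesis using 1 2 assms(3) unfolding trans_def by blast
      qed
    qed
  qed
  then show ?thesis by (auto simp: B_def)
qed

lemma reach_transfer:
  assumes "reach \<sigma> W h" "set h \<subseteq> W'" "asym W'"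
  shows "reach \<sigma> W' h"
  using assms
proof induction
  case Nil
  then show ?case by (simp add: reach.Nil)
next
  case (snoc h)
  have "winner_loser W' (\<sigma> h) = winner_loser W (\<sigma> h)"
  proof (cases "\<sigma> h \<in> W")
    case True
    then have "\<sigma> h \<in> W'" using snoc(4) by (simp add: winner_loser_def)
    then show ?thesis using True by (simp add: winner_loser_def)
  next
    case False
    then have "(snd (\<sigma> h), fst (\<sigma> h)) \<in> W'" using snoc(4) by (simp add: winner_loser_def)
    then have "\<sigma> h \<notin> W'" using snoc(5) unfolding asym_on_def
      by (cases "\<sigma> h") auto
    then show ?thesis using False by (simp add: winner_loser_def)
  qed
  moreover have "reach \<sigma> W' h" using snoc by simp
  moreover have "\<not> terminal h" using snoc by blast
  ultimately show ?case using reach.snoc[of \<sigma> W' h] by simp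
qed

lemma ind_sub:
  assumes "set h \<subseteq> R" "trans R"
  shows "induced h \<subseteq> R"
proof
  fix p assume "p \<in> induced h"
  then obtain a b where p: "p = (a, b)" "(a, b) \<in> (set h)\<^sup>+" unfolding induced_def by (cases p) auto
  from p(2) have "(a, b) \<in> R"
  proof (induction rule: trancl_induct)
    case (base y)
    then show ?case using assms(1) by blast
  next
    case (step y z)
    then show ?case using assms unfolding trans_def by blast
  qed
  then show "p \<in> R" using p by simp
qed

lemma not_terminal_ex: "\<not> terminal h \<Longrightarrow> \<exists>p. unranked (induced h) p"
  unfolding terminal_def total_on_def unranked_def by auto

lemma consec_feasible:
  fixes R :: "('a::finite) rel"
  assumes "ranking R" "\<forall>x y. consec R x y \<longrightarrow> (x, y) \<in> W"
  shows "feasible W R"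
proof -
  have tR: "trans R" "irrefl R" "total R"
    using assms(1) unfolding ranking_def proto_ranking_def by auto
  have asR: "(y, x) \<notin> R" if "(x, y) \<in> R" for x y
    using that tR(1,2) unfolding trans_def irrefl_def by blast
  define C where "C = {p. consec R (fst p) (snd p)}"
  define \<sigma> :: "'a strategy" where "\<sigma> h = (if \<exists>p. p \<in> C \<and> unranked (induced h) p
      then (SOME p. p \<in> C \<and> unranked (induced h) p) else (SOME p. unranked (induced h) p))" for h
  have str: "strategy \<sigma>"
    unfolding strategy_def
  proof (intro allI impI)
    fix h :: "('a \<times> 'a) list" assume "is_history h \<and> \<not> terminal h"
    then obtain p where "unranked (induced h) p" using not_terminal_ex by blast
    show "unranked (induced h) (\<sigma> h)"
    proof (cases "\<exists>p. p \<in> C \<and> unranked (induced h) p")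
      case True
      then show ?thesis unfolding \<sigma>_def if_P[OF True] using someI_ex[OF True] by blast
    next
      case False
      then show ?thesis unfolding \<sigma>_def if_not_P[OF False] using someI[of "unranked (induced h)" p] \<open>unranked (induced h) p\<close> by blast
    qed
  qed
  have key: "set h \<subseteq> R" if "reach \<sigma> W h" for h
    using that
  proof induction
    case Nil
    then show ?case by simp
  next
    case (snoc h)
    have sub: "induced h \<subseteq> R" using ind_sub snoc tR(1) by blast
    have exC: "\<exists>p. p \<in> C \<and> unranked (induced h) p"
    proof (rule ccontr)
      assume nC: "\<not> (\<exists>p. p \<in> C \<and> unranked (induced h) p)"
      have "\<forall>x y. consec R x y \<longrightarrow> (x, y) \<in> induced h"
      proof (intro allI impI)
        fix x y assume c: "consec R x y"
        then have xy: "(x, y) \<in> R" unfolding consec_def by blast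
        then have "x \<noteq> y" using tR(2) unfolding irrefl_def by blast
        moreover have "(y, x) \<notin> induced h" using sub asR[OF xy] by blast
        ultimately show "(x, y) \<in> induced h" using nC c unfolding C_def unranked_def by auto
      qed
      then have "R \<subseteq> induced h" using chain[OF tR(1,2)] trans_trancl unfolding induced_def by blast
      then have "terminal h" using tR(3) unfolding terminal_def total_on_def by blast
      then show False using snoc by blast
    qed
    then have "\<sigma> h \<in> C" unfolding \<sigma>_def if_P[OF exC] using someI_ex[OF exC] by blast
    then have "\<sigma> h \<in> R" "\<sigma> h \<in> W" using assms(2) unfolding C_def consec_def by (cases "\<sigma> h"; auto)+
    then have "winner_loser W (\<sigma> h) \<in> R" unfolding winner_loser_def by simp
    then show ?case using snoc by simp
  qed
  obtain h where h: "reach \<sigma> W h" "terminal h" using ex1_terminal[OF str, of W] by blast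
  have sub: "induced h \<subseteq> R" using ind_sub key[OF h(1)] tR(1) by blast
  have "R \<subseteq> induced h"
  proof
    fix p assume pR: "p \<in> R"
    obtain a b where p: "p = (a, b)" by (cases p)
    have "a \<noteq> b" using pR p tR(2) unfolding irrefl_def by blast
    then have "(a, b) \<in> induced h \<or> (b, a) \<in> induced h"
      using h(2) unfolding terminal_def total_on_def by blast
    then show "p \<in> induced h" using sub asR pR p by blast
  qed
  then have "outcome \<sigma> W = R" using outcome_eq[OF str h] sub by blast
  then show ?thesis unfolding feasible_def using assms(1) str by blast
qed

lemma worst_exists:
  assumes "finite A" "A \<noteq> {}" "ranking P"
  shows "\<exists>v\<in>A. \<forall>q\<in>A. q \<noteq> v \<longrightarrow> (q, v) \<in> P"
  using assms(1,2)
proof (induction A rule: finite_ne_induct)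
  case (singleton x)
  then show ?case by simp
next
  case (insert x F)
  then obtain v where v: "v \<in> F" "\<forall>q\<in>F. q \<noteq> v \<longrightarrow> (q, v) \<in> P" by blast
  have tP: "trans P" "total P" using assms(3) unfolding ranking_def proto_ranking_def by auto
  show ?case
  proof (cases "(v, x) \<in> P")
    case True
    have "\<forall>q\<in>insert x F. q \<noteq> x \<longrightarrow> (q, x) \<in> P"
    proof (intro ballI impI)
      fix q assume "q \<in> insert x F" "q \<noteq> x"
      then have "q \<in> F" by simp
      show "(q, x) \<in> P"
      proof (cases "q = v")
        case True
        then show ?thesis using \<open>(v, x) \<in> P\<close> by simp
      next
        case False
        then have "(q, v) \<in> P" using v \<open>q \<in> F\<close> by blast
        then show ?thesis using \<open>(v, x) \<in> P\<close> tP(1) unfolding trans_def by blast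
      qed
    qed
    then show ?thesis by blast
  next
    case False
    have "x \<noteq> v" using v insert by blast
    then have "(x, v) \<in> P" using False tP(2) unfolding total_on_def by blast
    then have "\<forall>q\<in>insert x F. q \<noteq> v \<longrightarrow> (q, v) \<in> P" using v by blast
    then show ?thesis using v by blast
  qed
qed

lemma eff_on:
  fixes P W :: "('a::finite) rel" and A :: "'a set"
  assumes tW: "tournament W" and rP: "ranking P"
  shows "\<exists>R. R \<subseteq> A \<times> A \<and> trans R \<and> irrefl R \<and> total_on A R \<and>
    (\<forall>x y. consec R x y \<longrightarrow> (x, y) \<in> W) \<and>
    (\<forall>x\<in>A. \<forall>y\<in>A. (x, y) \<in> P \<longrightarrow> (x, y) \<in> W \<longrightarrow> (x, y) \<in> R)"
  using finite[of A]
proof (induction A rule: finite_remove_induct)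
  case empty
  show ?case
    by (rule exI[of _ "{}"]) (simp add: trans_def irrefl_def total_on_def consec_def)
next
  case (remove A)
  obtain v where v: "v \<in> A" "\<forall>q\<in>A. q \<noteq> v \<longrightarrow> (q, v) \<in> P"
    using worst_exists[OF remove(1,2) rP] by blast
  define A0 where "A0 = A - {v}"
  obtain R0 where R0: "R0 \<subseteq> A0 \<times> A0" "trans R0" "irrefl R0" "total_on A0 R0"
    "\<forall>x y. consec R0 x y \<longrightarrow> (x, y) \<in> W"
    "\<forall>x\<in>A0. \<forall>y\<in>A0. (x, y) \<in> P \<longrightarrow> (x, y) \<in> W \<longrightarrow> (x, y) \<in> R0"
    using remove(4)[OF v(1)] unfolding A0_def by blast
  have vA0: "v \<notin> A0" unfolding A0_def by blast
  have AA0: "A = insert v A0" unfolding A0_def using v(1) by blast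
  have tP: "irrefl P" "trans P" using rP unfolding ranking_def proto_ranking_def by auto
  have tWW: "total W" "asym W" using tW unfolding tournament_def by auto
  define U where "U = {q \<in> A0. \<exists>q'\<in>A0. (q = q' \<or> (q, q') \<in> R0) \<and> (q', v) \<in> W}"
  define R where "R = R0 \<union> (U \<times> {v}) \<union> ({v} \<times> (A0 - U))"
  have UA0: "U \<subseteq> A0" unfolding U_def by blast
  have up: "a \<in> U" if aq: "(a, q) \<in> R0" and qU: "q \<in> U" for a q
  proof -
    obtain q' where q': "q' \<in> A0" "q = q' \<or> (q, q') \<in> R0" "(q', v) \<in> W" using qU unfolding U_def by blast
    have "(a, q') \<in> R0" using q'(2) aq R0(2) unfolding trans_def by blast
    moreover have "a \<in> A0" using aq R0(1) by blast
    ultimately show ?thesis unfolding U_def using q' by blast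
  qed
  have cross: "(q, q') \<in> R0" if "q \<in> U" "q' \<in> A0 - U" for q q'
  proof -
    have "q \<noteq> q'" using that by blast
    moreover have "(q', q) \<notin> R0" using up that by blast
    ultimately show ?thesis using R0(4) that UA0 unfolding total_on_def by blast
  qed
  have RA: "R \<subseteq> A \<times> A" unfolding R_def using R0(1) UA0 AA0 by blast
  have irr: "irrefl R" unfolding R_def irrefl_def using R0(3) vA0 UA0 unfolding irrefl_def by blast
  have tr: "trans R"
    unfolding trans_def
  proof (intro allI impI)
    fix a b c assume ab: "(a, b) \<in> R" and bc: "(b, c) \<in> R"
    show "(a, c) \<in> R"
    proof (cases "(a, b) \<in> R0")
      case True
      then have "b \<in> A0" "a \<in> A0" using R0(1) by blast+
      then show ?thesis using bc True R0(2) up vA0 unfolding R_def trans_def by blast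
    next
      case False
      then have "(a \<in> U \<and> b = v) \<or> (a = v \<and> b \<in> A0 - U)" using ab unfolding R_def by blast
      then show ?thesis
      proof
        assume "a \<in> U \<and> b = v"
        then show ?thesis using bc cross R0(1) vA0 unfolding R_def by blast
      next
        assume a: "a = v \<and> b \<in> A0 - U"
        then have "(b, c) \<in> R0" using bc vA0 UA0 unfolding R_def by blast
        then have "c \<in> A0 - U" using up a R0(1) by blast
        then show ?thesis using a unfolding R_def by blast
      qed
    qed
  qed
  have tot: "total_on A R"
    unfolding total_on_def
  proof (intro ballI impI)
    fix x y assume "x \<in> A" "y \<in> A" "x \<noteq> y"
    then show "(x, y) \<in> R \<or> (y, x) \<in> R"
      using R0(4) AA0 unfolding R_def total_on_def by blast
  qed
  have cons: "\<forall>x y. consec R x y \<longrightarrow> (x, y) \<in> W"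
  proof (intro allI impI)
    fix x y assume c: "consec R x y"
    then have xy: "(x, y) \<in> R" and nz: "\<not> (\<exists>z. (x, z) \<in> R \<and> (z, y) \<in> R)"
      unfolding consec_def by blast+
    have "(x, y) \<in> R0 \<or> (x \<in> U \<and> y = v) \<or> (x = v \<and> y \<in> A0 - U)" using xy unfolding R_def by blast
    then show "(x, y) \<in> W"
    proof (elim disjE)
      assume "(x, y) \<in> R0"
      moreover have "\<not> (\<exists>z. (x, z) \<in> R0 \<and> (z, y) \<in> R0)" using nz unfolding R_def by blast
      ultimately show ?thesis using R0(5) unfolding consec_def by blast
    next
      assume a: "x \<in> U \<and> y = v"
      then obtain q' where q': "q' \<in> A0" "x = q' \<or> (x, q') \<in> R0" "(q', v) \<in> W"
        unfolding U_def by blast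
      show ?thesis
      proof (cases "x = q'")
        case True
        then show ?thesis using q' a by simp
      next
        case False
        then have "(x, q') \<in> R0" using q' by blast
        moreover have "q' \<in> U" using q' unfolding U_def by blast
        ultimately have "(x, q') \<in> R" "(q', y) \<in> R" using a unfolding R_def by blast+
        then show ?thesis using nz by blast
      qed
    next
      assume a: "x = v \<and> y \<in> A0 - U"
      then have "(y, v) \<notin> W" unfolding U_def by blast
      moreover have "y \<noteq> v" using a vA0 by blast
      ultimately show ?thesis using a tWW(1) unfolding total_on_def by blast
    qed
  qed
  have eff: "\<forall>x\<in>A. \<forall>y\<in>A. (x, y) \<in> P \<longrightarrow> (x, y) \<in> W \<longrightarrow> (x, y) \<in> R"
  proof (intro ballI impI)
    fix x y assume x: "x \<in> A" and y: "y \<in> A" and P: "(x, y) \<in> P" and W: "(x, y) \<in> W"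
    have xy: "x \<noteq> y" using P tP(1) unfolding irrefl_def by blast
    show "(x, y) \<in> R"
    proof (cases "x = v")
      case True
      then have "(y, x) \<in> P" using v(2) y xy by auto
      then show ?thesis using P tP unfolding irrefl_def trans_def by blast
    next
      case False
      then have xA0: "x \<in> A0" using x AA0 by blast
      show ?thesis
      proof (cases "y = v")
        case True
        then have "x \<in> U" unfolding U_def using xA0 W by blast
        then show ?thesis using True unfolding R_def by blast
      next
        case False
        then have "y \<in> A0" using y AA0 by blast
        then show ?thesis using R0(6) xA0 P W unfolding R_def by blast
      qed
    qed
  qed
  show ?case using RA tr irr tot cons eff by blast
qed

lemma exists_eff:
  fixes P W :: "('a::finite) rel"
  assumes "tournament W" "ranking P"
  shows "\<exists>R. ranking R \<and> (\<forall>x y. consec R x y \<longrightarrow> (x, y) \<in> W) \<and> W_efficient P W R"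
proof -
  obtain R where R: "trans R" "irrefl R" "total_on UNIV R"
    "\<forall>x y. consec R x y \<longrightarrow> (x, y) \<in> W"
    "\<forall>x\<in>UNIV. \<forall>y\<in>UNIV. (x, y) \<in> P \<longrightarrow> (x, y) \<in> W \<longrightarrow> (x, y) \<in> R"
    using eff_on[OF assms, of UNIV] by blast
  then show ?thesis unfolding ranking_def proto_ranking_def W_efficient_def by blast
qed

theorem theorem2:
  fixes P :: "('a::finite) rel" and \<sigma> :: "'a strategy"
  assumes "ranking P" and "strategy \<sigma>"
  shows "regret_free P \<sigma> \<longleftrightarrow> efficient P \<sigma>"
proof
  have tP: "irrefl P" "trans P" "total P" using assms(1) unfolding ranking_def proto_ranking_def by auto
  assume rf: "regret_free P \<sigma>"
  show "efficient P \<sigma>"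
    unfolding efficient_def W_efficient_def
  proof (intro allI impI)
    fix W x y assume tW: "tournament W" and xyP: "(x, y) \<in> P" and xyW: "(x, y) \<in> W"
    show "(x, y) \<in> outcome \<sigma> W"
    proof (rule ccontr)
      assume nxy: "(x, y) \<notin> outcome \<sigma> W"
      obtain h where h: "reach \<sigma> W h" "terminal h" using ex1_terminal[OF assms(2), of W] by blast
      define R where "R = outcome \<sigma> W"
      have Rh: "R = induced h" unfolding R_def using outcome_eq[OF assms(2) h] .
      have rR: "ranking R" unfolding R_def using outcome_ranking[OF assms(2)] .
      have tR: "irrefl R" "trans R" "total R" using rR unfolding ranking_def proto_ranking_def by auto
      define S where "S = set h"
      have SW: "S \<subseteq> W" unfolding S_def using reach_in_W[OF tW assms(2) h(1)] .
      have SR: "S \<subseteq> R" unfolding S_def Rh induced_def by auto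
      have tWW: "total W" "asym W" using tW unfolding tournament_def by auto
      define W' where "W' = S \<union> {p \<in> P. (snd p, fst p) \<notin> S}"
      have asW': "asym W'"
      proof
        fix a b assume ab: "(a, b) \<in> W'"
        show "(b, a) \<notin> W'"
        proof
          assume ba: "(b, a) \<in> W'"
          have "(a, b) \<in> S \<or> ((a, b) \<in> P \<and> (b, a) \<notin> S)" using ab unfolding W'_def by auto
          moreover have "(b, a) \<in> S \<or> ((b, a) \<in> P \<and> (a, b) \<notin> S)" using ba unfolding W'_def by auto
          moreover have "\<not> ((a, b) \<in> S \<and> (b, a) \<in> S)" using SW tWW(2) unfolding asym_on_def by blast
          moreover have "\<not> ((a, b) \<in> P \<and> (b, a) \<in> P)" using tP(1,2) unfolding irrefl_def trans_def by blast
          ultimately show False by blast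
        qed
      qed
      have totW': "total W'"
        unfolding total_on_def
      proof (intro ballI impI)
        fix a b :: 'a assume "a \<noteq> b"
        then have "(a, b) \<in> P \<or> (b, a) \<in> P" using tP(3) unfolding total_on_def by blast
        then show "(a, b) \<in> W' \<or> (b, a) \<in> W'" unfolding W'_def by auto
      qed
      have tW': "tournament W'" unfolding tournament_def using asW' totW' by blast
      have "reach \<sigma> W' h" using reach_transfer[OF h(1) _ asW'] unfolding W'_def S_def by blast
      then have oW': "outcome \<sigma> W' = R" using outcome_eq[OF assms(2) _ h(2)] Rh by simp
      have unimp: "unimprovable P W' R" using rf tW' oW' unfolding regret_free_def by metis
      obtain R' where R': "ranking R'" "\<forall>a b. consec R' a b \<longrightarrow> (a, b) \<in> W'" "W_efficient P W' R'"
        using exists_eff[OF tW' assms(1)] by blast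
      have fR': "feasible W' R'" using consec_feasible[OF R'(1,2)] .
      have al: "more_aligned P R' R"
        unfolding more_aligned_def
      proof (intro allI impI)
        fix a b assume abP: "(a, b) \<in> P" and abR: "(a, b) \<in> R"
        have "(b, a) \<notin> R" using abR tR(1,2) unfolding irrefl_def trans_def by blast
        then have "(b, a) \<notin> S" using SR by blast
        then have "(a, b) \<in> W'" using abP unfolding W'_def by auto
        then show "(a, b) \<in> R'" using R'(3) abP unfolding W_efficient_def by blast
      qed
      have "(y, x) \<notin> S" using SW xyW tWW(2) unfolding asym_on_def by blast
      then have "(x, y) \<in> W'" using xyP unfolding W'_def by auto
      then have "(x, y) \<in> R'" using R'(3) xyP unfolding W_efficient_def by blast
      then have "R' \<noteq> R" using nxy unfolding R_def by blast
      then show False using unimp fR' al unfolding unimprovable_def by blast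
    qed
  qed
next
  have tP: "irrefl P" "trans P" "total P" using assms(1) unfolding ranking_def proto_ranking_def by auto
  assume ef: "efficient P \<sigma>"
  show "regret_free P \<sigma>"
    unfolding regret_free_def unimprovable_def
  proof (intro allI impI notI)
    fix W assume tW: "tournament W"
      and ex: "\<exists>R'. feasible W R' \<and> R' \<noteq> outcome \<sigma> W \<and> more_aligned P R' (outcome \<sigma> W)"
    define R where "R = outcome \<sigma> W"
    obtain R' where R': "feasible W R'" "R' \<noteq> R" "more_aligned P R' R" using ex unfolding R_def by blast
    have rR: "ranking R" unfolding R_def using outcome_ranking[OF assms(2)] .
    have tR: "irrefl R" "trans R" "total R" using rR unfolding ranking_def proto_ranking_def by auto
    have tR': "irrefl R'" "trans R'" "total R'" using R'(1) unfolding feasible_def ranking_def proto_ranking_def by auto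
    have effR: "W_efficient P W R" using ef tW unfolding efficient_def R_def by blast
    have cR: "\<forall>a b. consec R' a b \<longrightarrow> (a, b) \<in> R"
    proof (intro allI impI)
      fix a b assume c: "consec R' a b"
      have abR': "(a, b) \<in> R'" using c unfolding consec_def by blast
      have abW: "(a, b) \<in> W" using feasible_consec[OF tW R'(1) c] .
      have ab: "a \<noteq> b" using abR' tR'(1) unfolding irrefl_def by blast
      then have "(a, b) \<in> P \<or> (b, a) \<in> P" using tP(3) unfolding total_on_def by blast
      then show "(a, b) \<in> R"
      proof
        assume "(a, b) \<in> P"
        then show ?thesis using effR abW unfolding W_efficient_def by blast
      next
        assume baP: "(b, a) \<in> P"
        show ?thesis
        proof (rule ccontr)
          assume "(a, b) \<notin> R"
          then have "(b, a) \<in> R" using tR(3) ab unfolding total_on_def by blast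
          then have "(b, a) \<in> R'" using R'(3) baP unfolding more_aligned_def by blast
          then show False using abR' tR'(1,2) unfolding irrefl_def trans_def by blast
        qed
      qed
    qed
    have sub: "R' \<subseteq> R" using chain[OF tR'(2,1) tR(2) cR] .
    have "R \<subseteq> R'"
    proof
      fix p assume pR: "p \<in> R"
      obtain a b where p: "p = (a, b)" by (cases p)
      have "a \<noteq> b" using pR p tR(1) unfolding irrefl_def by blast
      then have "(a, b) \<in> R' \<or> (b, a) \<in> R'" using tR'(3) unfolding total_on_def by blast
      moreover have "(b, a) \<notin> R" using pR p tR(1,2) unfolding irrefl_def trans_def by blast
      ultimately show "p \<in> R'" using sub p by blast
    qed
    then show False using sub R'(2) by blast
  qed
qed

end
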